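(* Let $S=S(c,r)\subset\mathbb{R}^{n+1}$ be the sphere of center $c$ and radius $r$, and let $\mathcal{V}=\{V_1,\dots,V_s\}$ be a finite collection of codimension-one affine subspaces of $\mathbb{R}^{n+1}$ all containing $c$. Let $x,y\in S$ with $\mathcal{V}_x=\mathcal{V}_y$ and $y\in S_\alpha(x)$, where $S_\alpha=S_\alpha(x)$ is the stratum of $x$. Then for every $\epsilon>0$ the stratifications $(\partial_{rel}F_\alpha(x,\epsilon),\mathcal{V}_x)$ and $(\partial_{rel}F_\alpha(y,\epsilon),\mathcal{V}_y)$ are isometric.
   Context: For $x\in S$, $\mathcal{V}_x$ is the set of $V_i\in\mathcal{V}$ containing $x$. For $\alpha\subset\{1,\dots,s\}$, $V_\alpha=\bigcap_{i\in\alpha}V_i$ (with $V_\emptyset=\mathbb{R}^{n+1}$) and $S_\alpha=S\cap V_\alpha$ (a great sphere). The stratum $S_\alpha(x)$ of $x$ is the lowest-dimensional $S_\alpha$ containing $x$ (namely $S\cap\bigcap_{V_i\in\mathcal{V}_x}V_i$). For $z\in S_\alpha$ and $\epsilon>0$, write $W_\alpha$ for the linear subspace orthogonal to the direction space of $V_\alpha$; the relative boundary of the spherical cap with top $z$ is $\partial_{rel}F_\alpha(z,\epsilon)=\{p\in S: p-c=t(z-c)+u,\ t>0,\ u\in W_\alpha,\ \|u\|=\epsilon\}$; it is a Euclidean sphere (possibly empty) whose center lies on the line $c+\mathbb{R}(z-c)\subset V_\alpha$. A pair $(\Sigma,\mathcal{W})$ of a Euclidean sphere $\Sigma$ and a finite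 collection $\mathcal{W}$ of affine hyperplanes is a stratification; here $\mathcal{V}_x$ induces the stratification of $\partial_{rel}F_\alpha(x,\epsilon)$ given by the intersections of this sphere with members of $\mathcal{V}_x$. Two stratifications $(\Sigma_1,\mathcal{W}_1)$, $(\Sigma_2,\mathcal{W}_2)$ are isometric if there is a bijection $j:\mathcal{W}_1\to\mathcal{W}_2$ and an orthogonal affine map $O$ with $O(\Sigma_1)=\Sigma_2$ and $O(\Sigma_1\cap W)=\Sigma_2\cap j(W)$ for every $W\in\mathcal{W}_1$. *)

theory Defs
  imports "HOL-Analysis.Analysis"
begin

definition affine_hyperplane :: "'a::euclidean_space set \<Rightarrow> bool" where
  "affine_hyperplane V \<longleftrightarrow> (\<exists>a b. a \<noteq> 0 \<and> V = {p. a \<bullet> p = b})"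

definition hyps_at :: "'a set set \<Rightarrow> 'a \<Rightarrow> 'a set set" where
  "hyps_at \<V> x = {V \<in> \<V>. x \<in> V}"

text \<open>S_alpha for a subfamily alpha (given as a set of hyperplanes); empty family gives S.\<close>
definition strat_piece :: "'a set \<Rightarrow> 'a set set \<Rightarrow> 'a set" where
  "strat_piece S \<alpha> = S \<inter> \<Inter>\<alpha>"

definition stratum :: "'a set \<Rightarrow> 'a set set \<Rightarrow> 'a \<Rightarrow> 'a set" where
  "stratum S \<V> x = strat_piece S (hyps_at \<V> x)"

text \<open>W_alpha: orthogonal complement of the direction space of V_alpha (V_alpha contains c).\<close>
definition W_space :: "'a::euclidean_space \<Rightarrow> 'a set set \<Rightarrow> 'a set" where
  "W_space c \<alpha> = orthogonal_comp ((\<lambda>q. q - c) ` \<Inter>\<alpha>)"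

text \<open>Relative boundary of the spherical cap with top z on the sphere S(c,r).\<close>
definition rel_bdry_cap :: "'a::euclidean_space \<Rightarrow> real \<Rightarrow> 'a set set \<Rightarrow> 'a \<Rightarrow> real \<Rightarrow> 'a set" where
  "rel_bdry_cap c r \<alpha> z \<epsilon> =
     {p \<in> sphere c r. \<exists>t>0. \<exists>u \<in> W_space c \<alpha>. norm u = \<epsilon> \<and> p - c = t *\<^sub>R (z - c) + u}"

definition orthogonal_affine :: "('a::euclidean_space \<Rightarrow> 'a) \<Rightarrow> bool" where
  "orthogonal_affine T \<longleftrightarrow> (\<exists>f b. orthogonal_transformation f \<and> T = (\<lambda>p. f p + b))"

definition isometric_strat :: "'a::euclidean_space set \<Rightarrow> 'a set set \<Rightarrow> 'a set \<Rightarrow> 'a set set \<Rightarrow> bool" where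
  "isometric_strat \<Sigma>1 \<W>1 \<Sigma>2 \<W>2 \<longleftrightarrow>
     (\<exists>j T. bij_betw j \<W>1 \<W>2 \<and> orthogonal_affine T \<and> T ` \<Sigma>1 = \<Sigma>2 \<and>
        (\<forall>W \<in> \<W>1. T ` (\<Sigma>1 \<inter> W) = \<Sigma>2 \<inter> j W))"

end

theory Submission
  imports Defs
begin

definition hrefl :: "'a::euclidean_space \<Rightarrow> 'a \<Rightarrow> 'a" where
  "hrefl w v = v - ((2 * (v \<bullet> w)) / (w \<bullet> w)) *\<^sub>R w"

lemma hrefl_neg: "hrefl (-w) = hrefl w"
  by (simp add: hrefl_def fun_eq_iff)

lemma hrefl_inner_w: "w \<noteq> 0 \<Longrightarrow> hrefl w v \<bullet> w = - (v \<bullet> w)"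
  by (simp add: hrefl_def inner_diff_left)

lemma hrefl_invol: "hrefl w (hrefl w v) = v"
proof (cases "w = 0")
  case True thus ?thesis by (simp add: hrefl_def)
next
  case False
  have "hrefl w (hrefl w v) = hrefl w v + ((2 * (v \<bullet> w)) / (w \<bullet> w)) *\<^sub>R w"
    using hrefl_inner_w[OF False, of v] by (simp add: hrefl_def[of w "hrefl w v"])
  also have "\<dots> = v" by (simp add: hrefl_def)
  finally show ?thesis .
qed

lemma hrefl_linear: "linear (hrefl w)"
  by (rule linearI) (simp_all add: hrefl_def inner_add_left scaleR_add_left add_divide_distrib
      algebra_simps scaleR_right_diff_distrib)

lemma hrefl_inner: "hrefl w v \<bullet> hrefl w v' = v \<bullet> v'"
proof (cases "w = 0")
  case True thus ?thesis by (simp add: hrefl_def)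
next
  case False
  hence ww: "w \<bullet> w \<noteq> 0" by simp
  show ?thesis using ww
    by (simp add: hrefl_def inner_diff_left inner_diff_right field_simps inner_commute)
qed

lemma hrefl_orth: "orthogonal_transformation (hrefl w)"
  unfolding orthogonal_transformation_def using hrefl_linear hrefl_inner by blast

lemma hrefl_map:
  assumes "norm a = norm b" shows "hrefl (a - b) a = b"
proof (cases "a = b")
  case True thus ?thesis by (simp add: hrefl_def)
next
  case False
  have n: "a \<bullet> a = b \<bullet> b" using assms by (simp add: dot_square_norm)
  have w: "(a - b) \<bullet> (a - b) = 2 * (a \<bullet> (a - b))"
    using n by (simp add: inner_diff_left inner_diff_right inner_commute)
  have nz: "(a - b) \<bullet> (a - b) \<noteq> 0" using False by simp
  have "a \<bullet> (a - b) \<noteq> 0" using nz w by (metis mult_zero_right)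
  hence e: "(2 * (a \<bullet> (a - b))) / ((a - b) \<bullet> (a - b)) = 1" using w by simp
  show ?thesis unfolding hrefl_def e by simp
qed

lemma hrefl_perp_inner: "a \<bullet> w = 0 \<Longrightarrow> a \<bullet> hrefl w v = a \<bullet> v"
  by (simp add: hrefl_def inner_diff_right)

lemma hrefl_fix: "u \<bullet> w = 0 \<Longrightarrow> hrefl w u = u"
  by (simp add: hrefl_def)

lemma key:
  fixes c x y :: "'a::euclidean_space"
  assumes hyp: "\<forall>V \<in> \<alpha>. affine_hyperplane V \<and> c \<in> V"
    and x: "x \<in> \<Inter>\<alpha>" and y: "y \<in> \<Inter>\<alpha>"
    and xs: "x \<in> sphere c r" and ys: "y \<in> sphere c r"
  shows "\<And>p. p \<in> rel_bdry_cap c r \<alpha> x \<epsilon> \<Longrightarrow> c + hrefl (x - y) (p - c) \<in> rel_bdry_cap c r \<alpha> y \<epsilon>"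
    and "\<And>p V. V \<in> \<alpha> \<Longrightarrow> p \<in> V \<Longrightarrow> c + hrefl (x - y) (p - c) \<in> V"
proof -
  have wd: "x - y = (x - c) - (y - c)" by simp
  have hx: "hrefl (x - y) (x - c) = y - c"
    unfolding wd by (rule hrefl_map) (use xs ys in \<open>simp add: dist_norm norm_minus_commute\<close>)
  {
    fix p assume p: "p \<in> rel_bdry_cap c r \<alpha> x \<epsilon>"
    then obtain t u where t: "t > 0" and u: "u \<in> W_space c \<alpha>" and nu: "norm u = \<epsilon>"
      and pc: "p - c = t *\<^sub>R (x - c) + u" and ps: "p \<in> sphere c r"
      unfolding rel_bdry_cap_def by blast
    have "x - c \<in> (\<lambda>q. q - c) ` \<Inter>\<alpha>" "y - c \<in> (\<lambda>q. q - c) ` \<Inter>\<alpha>" using x y by auto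
    hence "(x - c) \<bullet> u = 0" "(y - c) \<bullet> u = 0" using u
      unfolding W_space_def orthogonal_comp_def orthogonal_def by auto
    hence "u \<bullet> (x - y) = 0" by (simp add: inner_diff_left inner_diff_right inner_commute)
    hence hu: "hrefl (x - y) u = u" by (rule hrefl_fix)
    have lin: "linear (hrefl (x - y))" by (rule hrefl_linear)
    have e: "hrefl (x - y) (p - c) = t *\<^sub>R (y - c) + u"
      unfolding pc linear_add[OF lin] linear_scale[OF lin] hx hu ..
    have nn: "norm (hrefl (x - y) (p - c)) = norm (p - c)"
      using hrefl_inner[of "x - y" "p - c" "p - c"] by (simp add: norm_eq_sqrt_inner)
    have "c + hrefl (x - y) (p - c) \<in> sphere c r"
      using ps nn by (simp add: dist_norm norm_minus_commute)
    thus "c + hrefl (x - y) (p - c) \<in> rel_bdry_cap c r \<alpha> y \<epsilon>"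
      unfolding rel_bdry_cap_def using t u nu e by auto
  }
  {
    fix p V assume V: "V \<in> \<alpha>" and p: "p \<in> V"
    obtain a b where V': "V = {q. a \<bullet> q = b}" using hyp V unfolding affine_hyperplane_def by blast
    have cV: "a \<bullet> c = b" using hyp V V' by auto
    have "a \<bullet> x = b" "a \<bullet> y = b" using x y V V' by auto
    hence "a \<bullet> (x - y) = 0" by (simp add: inner_diff_right)
    hence "a \<bullet> hrefl (x - y) (p - c) = a \<bullet> (p - c)" by (rule hrefl_perp_inner)
    thus "c + hrefl (x - y) (p - c) \<in> V" using p cV V' by (simp add: inner_diff_right inner_add_right)
  }
qed

lemma img_eq:
  assumes "\<And>p. T (T p) = p" "T ` A \<subseteq> B" "T ` B \<subseteq> A" shows "T ` A = B"
proof
  show "B \<subseteq> T ` A"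
  proof
    fix b assume "b \<in> B" thus "b \<in> T ` A" using assms by (metis image_eqI image_subset_iff)
  qed
qed (use assms in auto)

theorem lemma5p2:
  fixes c :: "'a::euclidean_space" and r :: real and \<V> :: "'a set set"
    and x y :: 'a and \<epsilon> :: real
  assumes "r > 0"
    and "finite \<V>"
    and "\<forall>V \<in> \<V>. affine_hyperplane V \<and> c \<in> V"
    and "x \<in> sphere c r" and "y \<in> sphere c r"
    and "hyps_at \<V> x = hyps_at \<V> y"
    and "y \<in> stratum (sphere c r) \<V> x"
    and "\<epsilon> > 0"
  shows "isometric_strat
           (rel_bdry_cap c r (hyps_at \<V> x) x \<epsilon>) (hyps_at \<V> x)
           (rel_bdry_cap c r (hyps_at \<V> x) y \<epsilon>) (hyps_at \<V> y)"
proof -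
  define \<alpha> where "\<alpha> = hyps_at \<V> x"
  have hyp: "\<forall>V \<in> \<alpha>. affine_hyperplane V \<and> c \<in> V" using assms(3) by (auto simp: \<alpha>_def hyps_at_def)
  have x: "x \<in> \<Inter>\<alpha>" by (auto simp: \<alpha>_def hyps_at_def)
  have y: "y \<in> \<Inter>\<alpha>" using assms(7) by (simp add: \<alpha>_def stratum_def strat_piece_def)
  define T where "T = (\<lambda>p. c + hrefl (x - y) (p - c))"
  have T': "T = (\<lambda>p. c + hrefl (y - x) (p - c))"
    unfolding T_def using hrefl_neg[of "x - y"] by simp
  have inv: "\<And>p. T (T p) = p" by (simp add: T_def hrefl_invol)
  have hn: "hrefl (y - x) = hrefl (x - y)" using hrefl_neg[of "x - y"] by simp
  note k1 = key[OF hyp x y assms(4,5)]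
  note k2 = key[OF hyp y x assms(5,4), unfolded hn]
  have oa: "orthogonal_affine T"
    unfolding orthogonal_affine_def
  proof (intro exI conjI)
    show "orthogonal_transformation (hrefl (x - y))" by (rule hrefl_orth)
    show "T = (\<lambda>p. hrefl (x - y) p + (c - hrefl (x - y) c))"
      unfolding T_def by (simp add: fun_eq_iff linear_diff[OF hrefl_linear])
  qed
  let ?A = "rel_bdry_cap c r \<alpha> x \<epsilon>" and ?B = "rel_bdry_cap c r \<alpha> y \<epsilon>"
  have AB: "T ` ?A = ?B" by (rule img_eq[OF inv]) (use k1(1) k2(1) in \<open>auto simp: T_def\<close>)
  have "\<forall>W \<in> \<alpha>. T ` (?A \<inter> W) = ?B \<inter> id W"
    using k1 k2 by (intro ballI img_eq[OF inv]) (auto simp: T_def)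
  moreover have "bij_betw id \<alpha> (hyps_at \<V> y)" using assms(6) by (simp add: \<alpha>_def)
  ultimately show ?thesis unfolding isometric_strat_def \<alpha>_def[symmetric]
    using oa AB by blast
qed

end
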